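(* Let $(N,v)$ be a balanced game. The set $\mathscr{E}(N,v)$ of effective coalitions equals the union of all minimal balanced collections $\mathscr{B}$ on $N$ such that $\sum_{S\in\mathscr{B}}\lambda^{\mathscr{B}}_S v(S)=v(N)$, where $\lambda^{\mathscr{B}}$ denotes the (unique) balancing weights of $\mathscr{B}$.
   Context: A game $(N,v)$: $N$ finite nonempty, $v:2^N\to\mathbb{R}$, $v(\varnothing)=0$; $x(S)=\sum_{i\in S}x_i$. Core: $C(N,v)=\{x\in\mathbb{R}^N\mid x(N)=v(N),\ x(S)\ge v(S)\ \forall S\subseteq N\}$; the game is balanced if $C(N,v)\ne\varnothing$. A coalition (nonempty $S\subseteq N$) is effective if $x(S)=v(S)$ for all $x\in C(N,v)$; $\mathscr{E}(N,v)$ is the set of effective coalitions. A collection $\mathscr{B}$ of nonempty subsets of $N$ is balanced if there exist positive weights $(\lambda_S)_{S\in\mathscr{B}}$ with $\sum_{S\in\mathscr{B}}\lambda_S\mathbf{1}^S=\mathbf{1}^N$ ($\mathbf{1}^S$ the characteristic vector); it is minimal if it contains no balanced proper subcollection, equivalently its balancing weights are unique. *)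

theory Defs
  imports Complex_Main
begin

text \<open>Cooperative TU games: player set N (finite, nonempty), characteristic
  function v on subsets, with v {} = 0. Payoff vectors are functions 'a => real;
  only their values on N matter.\<close>

definition game :: "'a set \<Rightarrow> ('a set \<Rightarrow> real) \<Rightarrow> bool" where
  "game N v \<longleftrightarrow> finite N \<and> N \<noteq> {} \<and> v {} = 0"

definition core :: "'a set \<Rightarrow> ('a set \<Rightarrow> real) \<Rightarrow> ('a \<Rightarrow> real) set" where
  "core N v = {x. sum x N = v N \<and> (\<forall>S. S \<subseteq> N \<longrightarrow> sum x S \<ge> v S)}"

definition balanced_game :: "'a set \<Rightarrow> ('a set \<Rightarrow> real) \<Rightarrow> bool" where
  "balanced_game N v \<longleftrightarrow> core N v \<noteq> {}"

definition effective_coalitions :: "'a set \<Rightarrow> ('a set \<Rightarrow> real) \<Rightarrow> 'a set set" where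
  "effective_coalitions N v =
     {S. S \<noteq> {} \<and> S \<subseteq> N \<and> (\<forall>x \<in> core N v. sum x S = v S)}"

text \<open>Balancing weights of a collection B of nonempty subsets of N: positive on B,
  (by convention) zero off B, and sum_{S in B} lambda_S 1^S = 1^N.\<close>

definition balancing_weights :: "'a set \<Rightarrow> 'a set set \<Rightarrow> ('a set \<Rightarrow> real) \<Rightarrow> bool" where
  "balancing_weights N B w \<longleftrightarrow>
     (\<forall>S\<in>B. w S > 0) \<and> (\<forall>S. S \<notin> B \<longrightarrow> w S = 0) \<and>
     (\<forall>i\<in>N. (\<Sum>S\<in>{S\<in>B. i \<in> S}. w S) = 1)"

definition balanced_collection :: "'a set \<Rightarrow> 'a set set \<Rightarrow> bool" where
  "balanced_collection N B \<longleftrightarrow>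
     (\<forall>S\<in>B. S \<noteq> {} \<and> S \<subseteq> N) \<and> (\<exists>w. balancing_weights N B w)"

definition minimal_balanced :: "'a set \<Rightarrow> 'a set set \<Rightarrow> bool" where
  "minimal_balanced N B \<longleftrightarrow>
     balanced_collection N B \<and> (\<forall>C. C \<subset> B \<longrightarrow> \<not> balanced_collection N C)"

text \<open>The (unique, for minimal B) balancing weights lambda^B.\<close>

definition bweights :: "'a set \<Rightarrow> 'a set set \<Rightarrow> 'a set \<Rightarrow> real" where
  "bweights N B = (THE w. balancing_weights N B w)"

end

theory Submission
  imports Defs
begin

lemma farkas:
  fixes N :: "'a set" and J :: "'j set"
  assumes "finite N" "finite J"
  shows "\<And>(a::'j \<Rightarrow> 'a \<Rightarrow> real) b. (\<exists>\<mu>. (\<forall>j\<in>J. 0 \<le> \<mu> j) \<and> (\<forall>i\<in>N. b i = (\<Sum>j\<in>J. \<mu> j * a j i))) \<or>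
         (\<exists>y. (\<forall>j\<in>J. 0 \<le> (\<Sum>i\<in>N. y i * a j i)) \<and> (\<Sum>i\<in>N. y i * b i) < 0)"
  using assms(2)
proof (induction J rule: finite_induct)
  case empty
  show ?case
  proof (cases "\<forall>i\<in>N. b i = 0")
    case True then show ?thesis by auto
  next
    case False
    then obtain i0 where i0: "i0 \<in> N" "b i0 \<noteq> 0" by auto
    have "(\<Sum>i\<in>N. b i * b i) > 0"
      by (rule sum_pos2[where i=i0]) (use i0 assms(1) in \<open>auto simp: zero_less_mult_iff\<close>)
    then have "(\<Sum>i\<in>N. (- b i) * b i) < 0"
      by (simp add: sum_negf)
    then have "\<exists>y. (\<Sum>i\<in>N. y i * b i) < 0" by (rule exI[where x="\<lambda>i. - b i"])
    then show ?thesis by simp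
  qed
next
  case (insert k J)
  note IH = insert.IH
  let ?ip = "\<lambda>y a. (\<Sum>i\<in>N. y i * a i)"
  from IH[where a=a and b=b] show ?case
  proof
    assume "\<exists>\<mu>. (\<forall>j\<in>J. 0 \<le> \<mu> j) \<and> (\<forall>i\<in>N. b i = (\<Sum>j\<in>J. \<mu> j * a j i))"
    then obtain \<mu> where mu: "\<forall>j\<in>J. 0 \<le> \<mu> j" "\<forall>i\<in>N. b i = (\<Sum>j\<in>J. \<mu> j * a j i)" by blast
    have eq: "(\<Sum>j\<in>J. (\<mu>(k:=0)) j * a j i) = (\<Sum>j\<in>J. \<mu> j * a j i)" for i
      using insert.hyps by (intro sum.cong) auto
    have "(\<forall>j\<in>insert k J. 0 \<le> (\<mu>(k:=0)) j) \<and> (\<forall>i\<in>N. b i = (\<Sum>j\<in>insert k J. (\<mu>(k:=0)) j * a j i))"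
      using mu insert.hyps eq by auto
    then show ?thesis by blast
  next
    assume "\<exists>y. (\<forall>j\<in>J. 0 \<le> (\<Sum>i\<in>N. y i * a j i)) \<and> (\<Sum>i\<in>N. y i * b i) < 0"
    then obtain y where y: "\<forall>j\<in>J. 0 \<le> ?ip y (a j)" "?ip y b < 0" by blast
    show ?thesis
    proof (cases "0 \<le> ?ip y (a k)")
      case True
      then show ?thesis using y by auto
    next
      case False
      define c where "c = ?ip y (a k)"
      have c: "c < 0" using False c_def by auto
      define a' where "a' = (\<lambda>j i. a j i - (?ip y (a j) / c) * a k i)"
      define b' where "b' = (\<lambda>i. b i - (?ip y b / c) * a k i)"
      from IH[where a=a' and b=b'] show ?thesis
      proof
        assume "\<exists>\<mu>. (\<forall>j\<in>J. 0 \<le> \<mu> j) \<and> (\<forall>i\<in>N. b' i = (\<Sum>j\<in>J. \<mu> j * a' j i))"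
        then obtain \<mu> where mu: "\<forall>j\<in>J. 0 \<le> \<mu> j" "\<forall>i\<in>N. b' i = (\<Sum>j\<in>J. \<mu> j * a' j i)" by blast
        define m where "m = (?ip y b - (\<Sum>j\<in>J. \<mu> j * ?ip y (a j))) / c"
        have "(\<Sum>j\<in>J. \<mu> j * ?ip y (a j)) \<ge> 0"
          using mu(1) y(1) by (intro sum_nonneg) auto
        then have m0: "m \<ge> 0" unfolding m_def using c y(2)
          by (intro divide_nonpos_neg) auto
        have "b i = (\<Sum>j\<in>insert k J. (\<mu>(k:=m)) j * a j i)" if "i \<in> N" for i
        proof -
          have e1: "(\<Sum>j\<in>J. (\<mu>(k:=m)) j * a j i) = (\<Sum>j\<in>J. \<mu> j * a j i)"
            using insert.hyps by (intro sum.cong) auto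
          have "b i = b' i + (?ip y b / c) * a k i" by (simp add: b'_def)
          also have "b' i = (\<Sum>j\<in>J. \<mu> j * a' j i)" using mu(2) that by auto
          also have "\<dots> = (\<Sum>j\<in>J. \<mu> j * a j i) - (\<Sum>j\<in>J. \<mu> j * ?ip y (a j)) / c * a k i"
            by (simp add: a'_def algebra_simps sum_subtractf sum_distrib_left sum_distrib_right sum_divide_distrib)
          finally have "b i = (\<Sum>j\<in>J. \<mu> j * a j i) + m * a k i"
            unfolding m_def using c by (simp add: field_simps)
          then show ?thesis using insert.hyps e1 by simp
        qed
        moreover have "\<forall>j\<in>insert k J. 0 \<le> (\<mu>(k:=m)) j" using m0 mu(1) by auto
        ultimately show ?thesis by blast
      next
        assume "\<exists>y'. (\<forall>j\<in>J. 0 \<le> (\<Sum>i\<in>N. y' i * a' j i)) \<and> (\<Sum>i\<in>N. y' i * b' i) < 0"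
        then obtain y' where y': "\<forall>j\<in>J. 0 \<le> ?ip y' (a' j)" "?ip y' b' < 0" by blast
        define z where "z = (\<lambda>i. y' i - (?ip y' (a k) / c) * y i)"
        have lin0: "?ip (\<lambda>i. y' i - r * y i) f = ?ip y' f - r * ?ip y f" for f r
          by (simp add: algebra_simps sum_subtractf sum_distrib_left)
        have lin: "?ip z f = ?ip y' f - (?ip y' (a k) / c) * ?ip y f" for f
          unfolding z_def by (rule lin0)
        have lin2: "?ip y' (\<lambda>i. f i - r * a k i) = ?ip y' f - r * ?ip y' (a k)" for f r
          by (simp add: algebra_simps sum_subtractf sum_distrib_left)
        have "?ip z (a j) = ?ip y' (a' j)" for j
          unfolding lin a'_def lin2 by (simp add: algebra_simps)
        moreover have "?ip z (a k) = 0" unfolding lin using c by (simp add: c_def)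
        moreover have "?ip z b = ?ip y' b'"
          unfolding lin b'_def lin2 by (simp add: algebra_simps)
        ultimately have "(\<forall>j\<in>insert k J. 0 \<le> ?ip z (a j)) \<and> ?ip z b < 0"
          using y' by auto
        then show ?thesis by blast
      qed
    qed
  qed
qed

definition wts :: "'a set \<Rightarrow> 'a set set \<Rightarrow> ('a set \<Rightarrow> real) \<Rightarrow> bool" where
  "wts N E w \<longleftrightarrow> (\<forall>T. 0 \<le> w T) \<and> (\<forall>T. T \<notin> E \<longrightarrow> w T = 0) \<and>
     (\<forall>i\<in>N. (\<Sum>T\<in>{T\<in>E. i \<in> T}. w T) = 1)"

lemma swap_sum:
  fixes w :: "'a set \<Rightarrow> real" and x :: "'a \<Rightarrow> real"
  assumes "finite N" "finite E" "\<forall>T\<in>E. T \<subseteq> N"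
  shows "(\<Sum>T\<in>E. w T * sum x T) = (\<Sum>i\<in>N. x i * (\<Sum>T\<in>{T\<in>E. i \<in> T}. w T))"
proof -
  have "(\<Sum>T\<in>E. w T * sum x T) = (\<Sum>T\<in>E. \<Sum>i\<in>N. if i \<in> T then w T * x i else 0)"
  proof (rule sum.cong)
    fix T assume "T \<in> E"
    then have "T = N \<inter> T" using assms(3) by auto
    then have "sum x T = (\<Sum>i\<in>N. if i \<in> T then x i else 0)"
      using sum.inter_restrict[OF assms(1), of x T] by simp
    then have "w T * sum x T = (\<Sum>i\<in>N. w T * (if i \<in> T then x i else 0))"
      by (simp only: sum_distrib_left)
    also have "\<dots> = (\<Sum>i\<in>N. if i \<in> T then w T * x i else 0)"
      by (rule sum.cong) auto
    finally show "w T * sum x T = (\<Sum>i\<in>N. if i \<in> T then w T * x i else 0)" .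
  qed simp
  also have "\<dots> = (\<Sum>i\<in>N. \<Sum>T\<in>E. if i \<in> T then w T * x i else 0)"
    by (rule sum.swap)
  also have "\<dots> = (\<Sum>i\<in>N. x i * (\<Sum>T\<in>{T\<in>E. i \<in> T}. w T))"
    using assms(2) by (simp add: sum.inter_filter[symmetric] sum_distrib_left mult.commute)
  finally show ?thesis .
qed

lemma wts_sum:
  fixes x :: "'a \<Rightarrow> real"
  assumes "wts N E w" "finite N" "finite E" "\<forall>T\<in>E. T \<subseteq> N"
  shows "(\<Sum>T\<in>E. w T * sum x T) = sum x N"
  using swap_sum[OF assms(2-4), of w x] assms(1) unfolding wts_def by simp

lemma wts_bal:
  assumes "wts N E w" "finite E"
  shows "balancing_weights N {T\<in>E. 0 < w T} w"
proof -
  have "(\<Sum>T\<in>{T\<in>{T\<in>E. 0 < w T}. i \<in> T}. w T) = (\<Sum>T\<in>{T\<in>E. i \<in> T}. w T)" for i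
  proof (rule sum.mono_neutral_left)
    show "\<forall>T\<in>{T \<in> E. i \<in> T} - {T \<in> {T \<in> E. 0 < w T}. i \<in> T}. w T = 0"
      using assms(1) unfolding wts_def by (auto simp: order_le_less)
  qed (use assms(2) in auto)
  then show ?thesis using assms(1) unfolding wts_def balancing_weights_def
    by (auto simp: order_le_less)
qed

lemma bal_wts:
  assumes "balancing_weights N B w"
  shows "wts N B w"
proof -
  have "0 \<le> w T" for T by (cases "T \<in> B") (use assms in \<open>auto simp: balancing_weights_def\<close>)
  then show ?thesis using assms unfolding wts_def balancing_weights_def by auto
qed

lemma pos_neg:
  fixes d :: "'b \<Rightarrow> real"
  assumes "finite A" "sum d A = 0" "T \<in> A" "d T > 0"
  shows "\<exists>T'\<in>A. d T' < 0"
proof (rule ccontr)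
  assume "\<not> ?thesis"
  then have "sum d A > 0" using assms by (intro sum_pos2[where i=T]) auto
  then show False using assms by simp
qed

lemma reduce:
  fixes d :: "'a set \<Rightarrow> real"
  assumes E: "finite E" and w: "wts N E w"
    and dz: "\<forall>T. w T = 0 \<longrightarrow> d T = 0"
    and ds: "\<forall>i\<in>N. (\<Sum>T\<in>{T\<in>E. i \<in> T}. d T) = 0"
    and T0: "d T0 < 0"
  shows "\<exists>w'. wts N E w' \<and> {T\<in>E. 0 < w' T} \<subset> {T\<in>E. 0 < w T} \<and> (\<forall>T. 0 \<le> d T \<longrightarrow> w T \<le> w' T)"
proof -
  have wE: "\<forall>T. T \<notin> E \<longrightarrow> w T = 0" and wn: "\<forall>T. 0 \<le> w T"
    and ws: "\<forall>i\<in>N. (\<Sum>T\<in>{T\<in>E. i \<in> T}. w T) = 1" using w unfolding wts_def by auto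
  define D where "D = {T\<in>E. d T < 0}"
  have dE: "d T \<noteq> 0 \<Longrightarrow> T \<in> E" for T using dz wE by blast
  have wpos: "d T \<noteq> 0 \<Longrightarrow> 0 < w T" for T using dz wn[rule_format, of T] by force
  have "T0 \<in> E" using dE[of T0] T0 by force
  then have D: "finite D" "D \<noteq> {}" using E T0 unfolding D_def by auto
  define t where "t = Min ((\<lambda>T. w T / (- d T)) ` D)"
  have "t \<in> (\<lambda>T. w T / (- d T)) ` D" unfolding t_def using D by (intro Min_in) auto
  then obtain T1 where T1: "T1 \<in> D" "t = w T1 / (- d T1)" by blast
  have tle: "T \<in> D \<Longrightarrow> t \<le> w T / (- d T)" for T
    unfolding t_def using D by (intro Min_le) auto
  have t0: "0 \<le> t" using T1 wn unfolding D_def by (auto simp: divide_le_0_iff less_imp_le)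
  define w' where "w' = (\<lambda>T. w T + t * d T)"
  have w'n: "0 \<le> w' T" for T
  proof (cases "d T < 0")
    case True
    then have "T \<in> D" using dE unfolding D_def by auto
    then have "t * (- d T) \<le> (w T / (- d T)) * (- d T)" using tle[of T] True
      by (intro mult_right_mono) auto
    then have "t * (- d T) \<le> w T" using True by simp
    then show ?thesis unfolding w'_def by simp
  next
    case False then show ?thesis unfolding w'_def using t0 wn[rule_format, of T] by simp
  qed
  have "wts N E w'"
    unfolding wts_def
  proof (intro conjI allI impI ballI)
    show "0 \<le> w' T" for T by (rule w'n)
    show "T \<notin> E \<Longrightarrow> w' T = 0" for T unfolding w'_def using wE dz by auto
    fix i assume "i \<in> N"
    then show "(\<Sum>T\<in>{T\<in>E. i \<in> T}. w' T) = 1"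
      using ws ds unfolding w'_def by (simp add: sum.distrib sum_distrib_left[symmetric])
  qed
  moreover have "{T\<in>E. 0 < w' T} \<subset> {T\<in>E. 0 < w T}"
  proof
    show "{T\<in>E. 0 < w' T} \<subseteq> {T\<in>E. 0 < w T}"
      using dz wn unfolding w'_def by (auto simp: order_le_less)
    have "T1 \<in> E" "d T1 < 0" using T1 unfolding D_def by auto
    then have "w' T1 = 0" "0 < w T1" unfolding w'_def T1(2) using wpos[of T1] by auto
    then have "T1 \<in> {T\<in>E. 0 < w T}" "T1 \<notin> {T\<in>E. 0 < w' T}" using \<open>T1 \<in> E\<close> by auto
    then show "{T\<in>E. 0 < w' T} \<noteq> {T\<in>E. 0 < w T}" by blast
  qed
  moreover have "\<forall>T. 0 \<le> d T \<longrightarrow> w T \<le> w' T" unfolding w'_def using t0 by auto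
  ultimately show ?thesis by blast
qed

lemma bw_unique:
  assumes N: "finite N" and B: "minimal_balanced N B"
    and w1: "balancing_weights N B w1" and w2: "balancing_weights N B w2"
  shows "w1 = w2"
proof (rule ccontr)
  assume ne: "w1 \<noteq> w2"
  have Bsub: "\<forall>S\<in>B. S \<noteq> {} \<and> S \<subseteq> N" using B unfolding minimal_balanced_def balanced_collection_def by auto
  have fB: "finite B" by (rule finite_subset[of _ "Pow N"]) (use Bsub N in auto)
  define d where "d = (\<lambda>T. w2 T - w1 T)"
  have W1: "wts N B w1" by (rule bal_wts[OF w1])
  have dz: "\<forall>T. w1 T = 0 \<longrightarrow> d T = 0"
  proof (intro allI impI)
    fix T assume "w1 T = 0"
    then have "T \<notin> B" using w1 unfolding balancing_weights_def by force
    then show "d T = 0" using w1 w2 unfolding balancing_weights_def d_def by simp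
  qed
  have ds: "\<forall>i\<in>N. (\<Sum>T\<in>{T\<in>B. i \<in> T}. d T) = 0"
  proof
    fix i assume i: "i \<in> N"
    have "(\<Sum>T\<in>{T\<in>B. i \<in> T}. w1 T) = 1" "(\<Sum>T\<in>{T\<in>B. i \<in> T}. w2 T) = 1"
      using w1 w2 i unfolding balancing_weights_def by blast+
    then show "(\<Sum>T\<in>{T\<in>B. i \<in> T}. d T) = 0" unfolding d_def by (simp only: sum_subtractf)
  qed
  from ne obtain T where "w1 T \<noteq> w2 T" by (auto simp: fun_eq_iff)
  then have T: "d T \<noteq> 0" unfolding d_def by simp
  have "\<exists>T0. d T0 < 0"
  proof (cases "d T < 0")
    case False
    then have "d T > 0" using T by auto
    then have "T \<in> B" using dz w1 unfolding balancing_weights_def by force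
    then obtain i where i: "i \<in> T" "i \<in> N" using Bsub by blast
    have "finite {T\<in>B. i \<in> T}" using fB by auto
    from pos_neg[OF this ds[rule_format, OF i(2)], of T] i \<open>T \<in> B\<close> \<open>d T > 0\<close>
    show ?thesis by auto
  qed auto
  then obtain T0 where "d T0 < 0" by blast
  from reduce[OF fB W1 dz ds this] obtain w' where
    w': "wts N B w'" "{T\<in>B. 0 < w' T} \<subset> {T\<in>B. 0 < w1 T}" by blast
  have "{T\<in>B. 0 < w1 T} = B" using w1 unfolding balancing_weights_def by auto
  moreover have "balanced_collection N {T\<in>B. 0 < w' T}"
    unfolding balanced_collection_def using Bsub wts_bal[OF w'(1) fB] by auto
  ultimately show False using B w'(2) unfolding minimal_balanced_def by auto
qed

lemma bweights_eq:
  assumes "finite N" "minimal_balanced N B" "balancing_weights N B w"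
  shows "bweights N B = w"
  unfolding bweights_def
proof (rule the_equality)
  show "balancing_weights N B w" by (rule assms(3))
  show "\<And>w'. balancing_weights N B w' \<Longrightarrow> w' = w"
    using bw_unique[OF assms(1,2)] assms(3) by blast
qed

lemma minimal_exists:
  assumes N: "finite N" and E: "\<forall>T\<in>E. T \<noteq> {} \<and> T \<subseteq> N"
    and w0: "wts N E w0" and S: "0 < w0 S"
  shows "\<exists>B. minimal_balanced N B \<and> S \<in> B \<and> B \<subseteq> E \<and> balancing_weights N B (bweights N B)"
proof -
  have fE: "finite E" by (rule finite_subset[of _ "Pow N"]) (use E N in auto)
  let ?P = "\<lambda>w. wts N E w \<and> 0 < w S"
  let ?m = "\<lambda>w. card {T\<in>E. 0 < w T}"
  define w where "w = arg_min ?m ?P"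
  have wP: "?P w" and wmin: "\<forall>w'. ?P w' \<longrightarrow> ?m w \<le> ?m w'"
    using arg_min_nat_lemma[of ?P w0 ?m] w0 S unfolding w_def by auto
  define B where "B = {T\<in>E. 0 < w T}"
  have bw: "balancing_weights N B w" unfolding B_def by (rule wts_bal[OF _ fE]) (use wP in auto)
  have SE: "S \<in> E"
  proof (rule ccontr)
    assume "S \<notin> E"
    then have "w S = 0" using wP unfolding wts_def by blast
    with wP show False by simp
  qed
  have SB: "S \<in> B" using SE wP unfolding B_def by auto
  have Bsub: "B \<subseteq> E" unfolding B_def by auto
  have bc: "balanced_collection N B" unfolding balanced_collection_def using bw E Bsub by auto
  have mb: "minimal_balanced N B"
    unfolding minimal_balanced_def
  proof (intro conjI allI impI notI bc)
    fix C assume CB: "C \<subset> B" and bcC: "balanced_collection N C"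
    then obtain \<mu> where mu: "balancing_weights N C \<mu>" unfolding balanced_collection_def by auto
    have W: "wts N E w" using wP by auto
    have wE: "\<forall>T. T \<notin> E \<longrightarrow> w T = 0" and wn: "\<forall>T. 0 \<le> w T" using W unfolding wts_def by auto
    have muC: "\<forall>T. T \<notin> C \<longrightarrow> \<mu> T = 0" "\<forall>T\<in>C. 0 < \<mu> T" using mu unfolding balancing_weights_def by auto
    define d where "d = (\<lambda>T. \<mu> T - w T)"
    have dz: "\<forall>T. w T = 0 \<longrightarrow> d T = 0" unfolding d_def using muC CB unfolding B_def by auto
    have musum: "(\<Sum>T\<in>{T\<in>E. i \<in> T}. \<mu> T) = 1" if "i \<in> N" for i
    proof -
      have "(\<Sum>T\<in>{T\<in>E. i \<in> T}. \<mu> T) = (\<Sum>T\<in>{T\<in>C. i \<in> T}. \<mu> T)"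
        by (rule sum.mono_neutral_right) (use fE CB Bsub muC in auto)
      then show ?thesis using mu that unfolding balancing_weights_def by auto
    qed
    have ds: "\<forall>i\<in>N. (\<Sum>T\<in>{T\<in>E. i \<in> T}. d T) = 0"
      using musum W unfolding wts_def d_def by (simp add: sum_subtractf)
    have "\<exists>w'. wts N E w' \<and> {T\<in>E. 0 < w' T} \<subset> B \<and> w S \<le> w' S"
    proof (cases "0 \<le> d S")
      case True
      obtain T0 where "T0 \<in> B" "T0 \<notin> C" using CB by auto
      then have "d T0 < 0" using muC unfolding d_def B_def by auto
      from reduce[OF fE W dz ds this] True show ?thesis unfolding B_def by blast
    next
      case False
      obtain i where i: "i \<in> S" "i \<in> N" using E SE by blast
      have "finite {T\<in>E. i \<in> T}" using fE by auto
      from pos_neg[OF this, of "\<lambda>T. - d T" S] ds i SE False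
      obtain T0 where "d T0 > 0" by (auto simp: sum_negf)
      then have "- d T0 < 0" by simp
      have dz': "\<forall>T. w T = 0 \<longrightarrow> - d T = 0" using dz by simp
      have ds': "\<forall>i\<in>N. (\<Sum>T\<in>{T\<in>E. i \<in> T}. - d T) = 0" using ds by (simp add: sum_negf)
      from reduce[OF fE W dz' ds' \<open>- d T0 < 0\<close>] False show ?thesis unfolding B_def
        by auto
    qed
    then obtain w' where w': "wts N E w'" "{T\<in>E. 0 < w' T} \<subset> B" "w S \<le> w' S" by blast
    have "?P w'" using w' wP by auto
    then have "?m w \<le> ?m w'" using wmin by blast
    moreover have "?m w' < ?m w" using w'(2) fE unfolding B_def by (intro psubset_card_mono) auto
    ultimately show False by simp
  qed
  have "bweights N B = w" by (rule bweights_eq[OF N mb bw])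
  then show ?thesis using mb SB Bsub bw by auto
qed

lemma ip_ind:
  fixes y :: "'a \<Rightarrow> real"
  assumes "finite N" "T \<subseteq> N"
  shows "(\<Sum>i\<in>N. y i * (if i \<in> T then 1 else 0)) = sum y T"
proof -
  have "(\<Sum>i\<in>N. y i * (if i \<in> T then 1 else 0)) = (\<Sum>i\<in>N. if i \<in> T then y i else 0)"
    by (rule sum.cong) auto
  also have "\<dots> = sum y (N \<inter> T)" by (rule sum.inter_restrict[OF assms(1), symmetric])
  also have "N \<inter> T = T" using assms(2) by auto
  finally show ?thesis .
qed

lemma sum_avg:
  fixes F :: "('a \<Rightarrow> real) set"
  shows "sum (\<lambda>i. (\<Sum>f\<in>F. f i) / real (card F)) R = (\<Sum>f\<in>F. sum f R) / real (card F)"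
proof -
  have "sum (\<lambda>i. (\<Sum>f\<in>F. f i) / real (card F)) R = (\<Sum>i\<in>R. \<Sum>f\<in>F. f i) / real (card F)"
    by (simp add: sum_divide_distrib)
  also have "(\<Sum>i\<in>R. \<Sum>f\<in>F. f i) = (\<Sum>f\<in>F. sum f R)" by (rule sum.swap)
  finally show ?thesis .
qed

lemma relint:
  assumes g: "game N v" and bg: "balanced_game N v"
  shows "\<exists>x\<in>core N v. \<forall>T. T \<subseteq> N \<and> T \<noteq> {} \<and> T \<notin> effective_coalitions N v \<longrightarrow> sum x T > v T"
proof -
  have fN: "finite N" using g unfolding game_def by auto
  obtain x0 where x0: "x0 \<in> core N v" using bg unfolding balanced_game_def by auto
  define NE where "NE = {T. T \<subseteq> N \<and> T \<noteq> {} \<and> T \<notin> effective_coalitions N v}"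
  have fNE: "finite NE" unfolding NE_def using fN by (rule rev_finite_subset[OF finite_Pow_iff[THEN iffD2]]) auto
  have "\<forall>T\<in>NE. \<exists>x\<in>core N v. sum x T \<noteq> v T"
    unfolding NE_def effective_coalitions_def by auto
  then obtain xc where xc: "\<forall>T\<in>NE. xc T \<in> core N v \<and> sum (xc T) T \<noteq> v T" by metis
  define F where "F = insert x0 (xc ` NE)"
  have fF: "finite F" "F \<noteq> {}" unfolding F_def using fNE by auto
  have Fc: "F \<subseteq> core N v" unfolding F_def using x0 xc by auto
  have cF: "real (card F) > 0" using fF by (simp add: card_gt_0_iff)
  define x where "x = (\<lambda>i. (\<Sum>f\<in>F. f i) / real (card F))"
  have ge: "(\<Sum>f\<in>F. sum f R) \<ge> real (card F) * v R" if "R \<subseteq> N" for R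
  proof -
    have "(\<Sum>f\<in>F. sum f R) \<ge> (\<Sum>f\<in>F. v R)"
      using Fc that unfolding core_def by (intro sum_mono) auto
    then show ?thesis by simp
  qed
  have "sum x N = v N"
  proof -
    have "(\<Sum>f\<in>F. sum f N) = (\<Sum>f\<in>F. v N)" using Fc unfolding core_def by (intro sum.cong) auto
    then show ?thesis unfolding x_def sum_avg using cF by simp
  qed
  moreover have "sum x R \<ge> v R" if "R \<subseteq> N" for R
    unfolding x_def sum_avg using ge[OF that] cF by (simp add: le_divide_eq mult.commute)
  ultimately have xcore: "x \<in> core N v" unfolding core_def by auto
  have "sum x T > v T" if "T \<in> NE" for T
  proof -
    have TN: "T \<subseteq> N" using that unfolding NE_def by auto
    have "(\<Sum>f\<in>F. v T) < (\<Sum>f\<in>F. sum f T)"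
    proof (rule sum_strict_mono_ex1[OF fF(1)])
      show "\<forall>f\<in>F. v T \<le> sum f T" using Fc TN unfolding core_def by auto
      have inF: "xc T \<in> F" unfolding F_def using that by blast
      have c1: "xc T \<in> core N v" and c2: "sum (xc T) T \<noteq> v T" using xc that by auto
      have "v T \<le> sum (xc T) T" using c1 TN unfolding core_def by blast
      then have "v T < sum (xc T) T" using c2 by (intro order_le_neq_trans) auto
      with inF show "\<exists>f\<in>F. v T < sum f T" by blast
    qed
    then show ?thesis unfolding x_def sum_avg using cF by (simp add: less_divide_eq mult.commute)
  qed
  with xcore show ?thesis unfolding NE_def by blast
qed

lemma perturb:
  fixes y :: "'a \<Rightarrow> real"
  assumes fN: "finite N" and v0: "v {} = 0" and x: "x \<in> core N v"
    and xs: "\<forall>T. T \<subseteq> N \<and> T \<noteq> {} \<and> T \<notin> E \<longrightarrow> sum x T > v T"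
    and yN: "sum y N = 0" and yE: "\<forall>T\<in>E. sum y T \<ge> 0"
  shows "\<exists>e>0. (\<lambda>i. x i + e * y i) \<in> core N v"
proof -
  define NE where "NE = {T. T \<subseteq> N \<and> T \<noteq> {} \<and> T \<notin> E}"
  have fNE: "finite NE" unfolding NE_def using fN by (rule rev_finite_subset[OF finite_Pow_iff[THEN iffD2]]) auto
  define A where "A = insert 1 ((\<lambda>T. (sum x T - v T) / (\<bar>sum y T\<bar> + 1)) ` NE)"
  define e where "e = Min A"
  have fA: "finite A" "A \<noteq> {}" unfolding A_def using fNE by auto
  have "\<forall>a\<in>A. 0 < a" unfolding A_def using xs unfolding NE_def
    by (auto intro!: divide_pos_pos)
  then have e0: "0 < e" unfolding e_def using fA by (simp add: Min_gr_iff)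
  have ele: "e \<le> (sum x T - v T) / (\<bar>sum y T\<bar> + 1)" if "T \<in> NE" for T
    unfolding e_def A_def using fA that unfolding A_def by (intro Min_le) auto
  define z where "z = (\<lambda>i. x i + e * y i)"
  have sz: "sum z R = sum x R + e * sum y R" for R
    unfolding z_def by (simp add: sum.distrib sum_distrib_left)
  have "sum z N = v N" using sz yN x unfolding core_def by simp
  moreover have "sum z R \<ge> v R" if R: "R \<subseteq> N" for R
  proof (cases "R = {}")
    case True then show ?thesis using v0 by simp
  next
    case False
    show ?thesis
    proof (cases "R \<in> E")
      case True
      then have "0 \<le> e * sum y R" using e0 yE by simp
      moreover have "v R \<le> sum x R" using x R unfolding core_def by auto
      ultimately show ?thesis unfolding sz by linarith
    next
      case False': False
      then have RN: "R \<in> NE" unfolding NE_def using R False by auto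
      have pos: "0 < \<bar>sum y R\<bar> + 1" by simp
      have "e * (\<bar>sum y R\<bar> + 1) \<le> sum x R - v R"
        using ele[OF RN] pos by (simp add: le_divide_eq)
      then have h1: "e * \<bar>sum y R\<bar> + e \<le> sum x R - v R" by (simp add: distrib_left)
      have "e * (- \<bar>sum y R\<bar>) \<le> e * sum y R" using e0
        by (intro mult_left_mono) auto
      then have h2: "- (e * \<bar>sum y R\<bar>) \<le> e * sum y R" by simp
      show ?thesis unfolding sz using h1 h2 e0 by linarith
    qed
  qed
  ultimately have "z \<in> core N v" unfolding core_def by auto
  then show ?thesis using e0 unfolding z_def by blast
qed

theorem lemma5p3:
  fixes N :: "'a set" and v :: "'a set \<Rightarrow> real"
  assumes "game N v" and "balanced_game N v"
  shows "effective_coalitions N v =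
           \<Union> {B. minimal_balanced N B \<and> (\<Sum>S\<in>B. bweights N B S * v S) = v N}"
proof
  have fN: "finite N" and Nne: "N \<noteq> {}" and v0: "v {} = 0" using assms(1) unfolding game_def by auto
  define E where "E = effective_coalitions N v"
  have Esub: "\<forall>T\<in>E. T \<noteq> {} \<and> T \<subseteq> N" unfolding E_def effective_coalitions_def by auto
  have fE: "finite E" by (rule finite_subset[of _ "Pow N"]) (use Esub fN in auto)
  have NE: "N \<in> E" unfolding E_def effective_coalitions_def core_def using Nne by auto
  obtain xs where xs: "xs \<in> core N v" "\<forall>T. T \<subseteq> N \<and> T \<noteq> {} \<and> T \<notin> E \<longrightarrow> sum xs T > v T"
    using relint[OF assms] unfolding E_def by blast
  show "effective_coalitions N v \<subseteq> \<Union> {B. minimal_balanced N B \<and> (\<Sum>S\<in>B. bweights N B S * v S) = v N}"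
  proof
    fix S assume "S \<in> effective_coalitions N v"
    then have SE: "S \<in> E" unfolding E_def .
    define J where "J = insert None (Some ` E)"
    have fJ: "finite J" unfolding J_def using fE by auto
    define a :: "'a set option \<Rightarrow> 'a \<Rightarrow> real" where
      "a = (\<lambda>j i. case j of None \<Rightarrow> -1 | Some T \<Rightarrow> (if i \<in> T then 1 else 0))"
    define b :: "'a \<Rightarrow> real" where "b = (\<lambda>i. - (if i \<in> S then 1 else 0))"
    have sumJ: "(\<Sum>j\<in>J. g j) = g None + (\<Sum>T\<in>E. g (Some T))" for g :: "'a set option \<Rightarrow> real"
      unfolding J_def using fE by (simp add: sum.reindex)
    from farkas[OF fN fJ, of b a] show "S \<in> \<Union> {B. minimal_balanced N B \<and> (\<Sum>S\<in>B. bweights N B S * v S) = v N}"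
    proof
      assume "\<exists>\<mu>. (\<forall>j\<in>J. 0 \<le> \<mu> j) \<and> (\<forall>i\<in>N. b i = (\<Sum>j\<in>J. \<mu> j * a j i))"
      then obtain \<mu> where mu0: "\<forall>j\<in>J. 0 \<le> \<mu> j" and mueq: "\<forall>i\<in>N. b i = (\<Sum>j\<in>J. \<mu> j * a j i)" by blast
      define c where "c = \<mu> None"
      have ceq: "c = (if i \<in> S then 1 else 0) + (\<Sum>T\<in>{T\<in>E. i \<in> T}. \<mu> (Some T))" if "i \<in> N" for i
      proof -
        have "b i = - c + (\<Sum>T\<in>E. \<mu> (Some T) * (if i \<in> T then 1 else 0))"
          using mueq that unfolding sumJ c_def a_def by simp
        also have "(\<Sum>T\<in>E. \<mu> (Some T) * (if i \<in> T then 1 else 0)) = (\<Sum>T\<in>E. if i \<in> T then \<mu> (Some T) else 0)"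
          by (rule sum.cong) auto
        also have "\<dots> = (\<Sum>T\<in>{T\<in>E. i \<in> T}. \<mu> (Some T))" using fE by (simp add: sum.inter_filter)
        finally show ?thesis unfolding b_def by linarith
      qed
      have muS: "\<forall>T\<in>E. 0 \<le> \<mu> (Some T)" using mu0 unfolding J_def by auto
      obtain i0 where i0: "i0 \<in> S" "i0 \<in> N" using SE Esub by blast
      have "0 \<le> (\<Sum>T\<in>{T\<in>E. i0 \<in> T}. \<mu> (Some T))" using muS by (intro sum_nonneg) auto
      then have c1: "1 \<le> c" using ceq[OF i0(2)] i0(1) by simp
      define w0 where "w0 = (\<lambda>T. if T \<in> E then (\<mu> (Some T) + (if T = S then 1 else 0)) / c else 0)"
      have "wts N E w0"
        unfolding wts_def
      proof (intro conjI allI impI ballI)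
        show "0 \<le> w0 T" for T unfolding w0_def using muS c1 by auto
        show "T \<notin> E \<Longrightarrow> w0 T = 0" for T unfolding w0_def by auto
        fix i assume iN: "i \<in> N"
        have "(\<Sum>T\<in>{T\<in>E. i \<in> T}. w0 T) = (\<Sum>T\<in>{T\<in>E. i \<in> T}. (\<mu> (Some T) + (if T = S then 1 else 0)) / c)"
          unfolding w0_def by (rule sum.cong) auto
        also have "\<dots> = ((\<Sum>T\<in>{T\<in>E. i \<in> T}. \<mu> (Some T)) + (\<Sum>T\<in>{T\<in>E. i \<in> T}. (if T = S then 1 else 0))) / c"
          by (simp add: sum_divide_distrib[symmetric] sum.distrib)
        also have "(\<Sum>T\<in>{T\<in>E. i \<in> T}. (if T = S then 1 else 0)) = (if S \<in> {T\<in>E. i \<in> T} then 1 else (0::real))"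
          using fE by (simp add: sum.delta')
        also have "\<dots> = (if i \<in> S then 1 else 0)" using SE by auto
        finally show "(\<Sum>T\<in>{T\<in>E. i \<in> T}. w0 T) = 1" using ceq[OF iN] c1 by simp
      qed
      moreover have "0 < w0 S" unfolding w0_def using SE muS c1 by auto
      ultimately obtain B where B: "minimal_balanced N B" "S \<in> B" "B \<subseteq> E"
          "balancing_weights N B (bweights N B)"
        using minimal_exists[OF fN Esub] by blast
      have fB: "finite B" using B(3) fE by (rule finite_subset)
      have "(\<Sum>T\<in>B. bweights N B T * v T) = (\<Sum>T\<in>B. bweights N B T * sum xs T)"
        using B(3) xs(1) unfolding E_def effective_coalitions_def by (intro sum.cong) auto
      also have "\<dots> = sum xs N" using wts_sum[OF bal_wts[OF B(4)] fN fB] B(3) Esub by auto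
      also have "\<dots> = v N" using xs(1) unfolding core_def by auto
      finally show ?thesis using B by blast
    next
      assume "\<exists>y. (\<forall>j\<in>J. 0 \<le> (\<Sum>i\<in>N. y i * a j i)) \<and> (\<Sum>i\<in>N. y i * b i) < 0"
      then obtain y where y1: "\<forall>j\<in>J. 0 \<le> (\<Sum>i\<in>N. y i * a j i)" and y2: "(\<Sum>i\<in>N. y i * b i) < 0" by blast
      have yE: "\<forall>T\<in>E. sum y T \<ge> 0"
      proof
        fix T assume T: "T \<in> E"
        then have "0 \<le> (\<Sum>i\<in>N. y i * a (Some T) i)" using y1 unfolding J_def by auto
        then show "sum y T \<ge> 0" unfolding a_def using ip_ind[OF fN, of T y] T Esub by simp
      qed
      have "0 \<le> (\<Sum>i\<in>N. y i * a None i)" using y1 unfolding J_def by auto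
      then have "sum y N \<le> 0" unfolding a_def by (simp add: sum_negf)
      then have yN: "sum y N = 0" using yE NE by force
      have "(\<Sum>i\<in>N. y i * b i) = - sum y S"
        unfolding b_def using ip_ind[OF fN, of S y] SE Esub by (simp add: sum_negf)
      then have yS: "sum y S > 0" using y2 by simp
      obtain e where e: "e > 0" "(\<lambda>i. xs i + e * y i) \<in> core N v"
        using perturb[OF fN v0 xs(1) xs(2) yN yE] by blast
      have "sum (\<lambda>i. xs i + e * y i) S = v S" "sum xs S = v S"
        using e(2) xs(1) SE unfolding E_def effective_coalitions_def by auto
      then have "e * sum y S = 0" by (simp add: sum.distrib sum_distrib_left)
      then show ?thesis using e(1) yS by simp
    qed
  qed
next
  show "\<Union> {B. minimal_balanced N B \<and> (\<Sum>S\<in>B. bweights N B S * v S) = v N} \<subseteq> effective_coalitions N v"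
  proof
    fix S assume "S \<in> \<Union> {B. minimal_balanced N B \<and> (\<Sum>S\<in>B. bweights N B S * v S) = v N}"
    then obtain B where B: "minimal_balanced N B" "(\<Sum>S\<in>B. bweights N B S * v S) = v N" "S \<in> B" by blast
    have fN: "finite N" using assms(1) unfolding game_def by auto
    have Bsub: "\<forall>T\<in>B. T \<noteq> {} \<and> T \<subseteq> N" using B(1) unfolding minimal_balanced_def balanced_collection_def by auto
    have fB: "finite B" by (rule finite_subset[of _ "Pow N"]) (use Bsub fN in auto)
    obtain w where w: "balancing_weights N B w" using B(1) unfolding minimal_balanced_def balanced_collection_def by auto
    have bw: "bweights N B = w" by (rule bweights_eq[OF fN B(1) w])
    have "sum x S = v S" if x: "x \<in> core N v" for x
    proof -
      have "(\<Sum>T\<in>B. w T * sum x T) = sum x N" using wts_sum[OF bal_wts[OF w] fN fB] Bsub by auto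
      also have "\<dots> = (\<Sum>T\<in>B. w T * v T)" using x B(2) bw unfolding core_def by auto
      finally have eq: "(\<Sum>T\<in>B. w T * sum x T) = (\<Sum>T\<in>B. w T * v T)" .
      have "(\<Sum>T\<in>B. w T * (sum x T - v T)) = (\<Sum>T\<in>B. w T * sum x T) - (\<Sum>T\<in>B. w T * v T)"
        by (simp only: right_diff_distrib sum_subtractf)
      with eq have s0: "(\<Sum>T\<in>B. w T * (sum x T - v T)) = 0" by simp
      have nn: "\<forall>T\<in>B. 0 \<le> w T * (sum x T - v T)"
      proof
        fix T assume T: "T \<in> B"
        have "0 < w T" using w T unfolding balancing_weights_def by blast
        moreover have "v T \<le> sum x T" using x T Bsub unfolding core_def by blast
        ultimately show "0 \<le> w T * (sum x T - v T)" by (intro mult_nonneg_nonneg) auto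
      qed
      have "\<forall>T\<in>B. w T * (sum x T - v T) = 0"
        using iffD1[OF sum_nonneg_eq_0_iff[OF fB] s0] nn by blast
      then have "w S * (sum x S - v S) = 0" using B(3) by blast
      moreover have "w S > 0" using w B(3) unfolding balancing_weights_def by auto
      ultimately show ?thesis by simp
    qed
    then show "S \<in> effective_coalitions N v" unfolding effective_coalitions_def using Bsub B(3) by auto
  qed
qed

end
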